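(* Let $\Lambda_{[n]}=\{\{1,2,\dots,n\}:n\in\mathbb N\}\subseteq\mathcal P_{fin}(\mathbb N)$ (where $\mathbb N=\{1,2,3,\dots\}$), let $I$ be a fine ideal of $\mathfrak F(\mathcal P_{fin}(\mathbb N),\mathbb R)$ containing $I_{0,\Lambda_{[n]}}$, and let $P$ be the probability of the NAP-space produced by $(\mathbb N,1,I)$ (constant weight $1$). If $A\subseteq\mathbb N$ and the limit $L=\lim_{n\to\infty}|A\cap\{1,\dots,n\}|/n$ exists (in the classical sense), then $P(A)-L$ is infinitesimal.
   Context: $\mathcal P_{fin}(\Omega)$ is the set of finite subsets of $\Omega$ and $\mathfrak F=\mathfrak F(\mathcal P_{fin}(\Omega),\mathbb R)$ the real algebra of functions $\mathcal P_{fin}(\Omega)\to\mathbb R$ with pointwise operations. For $\omega\in\Omega$, $\chi_\lambda(\omega)=1$ if $\omega\in\lambda$, else $0$. An ideal $I$ of $\mathfrak F$ is fine if it is maximal and $\lambda\mapsto 1-\chi_\lambda(\omega)$ lies in $I$ for every $\omega\in\Omega$. For $\Lambda\subseteq\mathcal P_{fin}(\Omega)$, $I_{0,\Lambda}=\{\varphi\in\mathfrak F:\varphi(\lambda)=0\text{ for all }\lambda\in\Lambda\}$. The NAP-space produced by $(\Omega,w,I)$ ($w:\Omega\to\mathbb R^+$, $I$ fine) has range field $\mathfrak F/I$, $J$ the canonical projection $\varphi\mapsto\varphi+I$, and $P(A)=J\big(\lambda\mapsto\sum_{\omega\in A\cap\lambda}w(\omega)\big)/J\big(\lambda\mapsto\sum_{\omega\in\lambda}w(\omega)\big)$.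 An element $x$ of this ordered field is infinitesimal if $|x|<1/n$ for all $n\in\mathbb N$. *)

theory Defs
  imports Complex_Main "HOL-Library.FSet" "HOL-Algebra.QuotRing"
begin

text \<open>The real algebra F(P_fin(Omega), R) of all real functions on the finite
subsets of Omega (Omega = UNIV :: 'a), with pointwise operations, as a HOL-Algebra ring.\<close>

definition FunAlg :: "('a fset \<Rightarrow> real) ring" where
  "FunAlg = \<lparr>carrier = UNIV, monoid.mult = (\<lambda>f g l. f l * g l), one = (\<lambda>_. 1),
             zero = (\<lambda>_. 0), add = (\<lambda>f g l. f l + g l)\<rparr>"

definition chi :: "'a fset \<Rightarrow> 'a \<Rightarrow> real" where
  "chi l \<omega> = (if \<omega> |\<in>| l then 1 else 0)"

definition fine_ideal :: "('a fset \<Rightarrow> real) set \<Rightarrow> bool" where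
  "fine_ideal I \<longleftrightarrow> maximalideal I FunAlg \<and> (\<forall>\<omega>. (\<lambda>l. 1 - chi l \<omega>) \<in> I)"

definition I0 :: "'a fset set \<Rightarrow> ('a fset \<Rightarrow> real) set" where
  "I0 \<Lambda> = {\<phi>. \<forall>l\<in>\<Lambda>. \<phi> l = 0}"

abbreviation QF :: "('a fset \<Rightarrow> real) set \<Rightarrow> ('a fset \<Rightarrow> real) set ring" where
  "QF I \<equiv> FunAlg Quot I"

definition projJ :: "('a fset \<Rightarrow> real) set \<Rightarrow> ('a fset \<Rightarrow> real) \<Rightarrow> ('a fset \<Rightarrow> real) set" where
  "projJ I \<phi> = I +>\<^bsub>FunAlg\<^esub> \<phi>"

definition napP :: "('a \<Rightarrow> real) \<Rightarrow> ('a fset \<Rightarrow> real) set \<Rightarrow> 'a set \<Rightarrow> ('a fset \<Rightarrow> real) set" where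
  "napP w I A =
     projJ I (\<lambda>l. \<Sum>\<omega>\<in>fset l \<inter> A. w \<omega>) \<otimes>\<^bsub>QF I\<^esub>
     inv\<^bsub>QF I\<^esub> (projJ I (\<lambda>l. \<Sum>\<omega>\<in>fset l. w \<omega>))"

definition qle :: "('a fset \<Rightarrow> real) set \<Rightarrow> ('a fset \<Rightarrow> real) set \<Rightarrow> ('a fset \<Rightarrow> real) set \<Rightarrow> bool" where
  "qle I x y \<longleftrightarrow> (\<exists>\<phi> \<psi>. x = projJ I \<phi> \<and> y = projJ I \<psi> \<and> (\<forall>l. \<phi> l \<le> \<psi> l))"

definition qlt :: "('a fset \<Rightarrow> real) set \<Rightarrow> ('a fset \<Rightarrow> real) set \<Rightarrow> ('a fset \<Rightarrow> real) set \<Rightarrow> bool" where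
  "qlt I x y \<longleftrightarrow> qle I x y \<and> x \<noteq> y"

definition qabs :: "('a fset \<Rightarrow> real) set \<Rightarrow> ('a fset \<Rightarrow> real) set \<Rightarrow> ('a fset \<Rightarrow> real) set" where
  "qabs I x = (if qle I \<zero>\<^bsub>QF I\<^esub> x then x else \<ominus>\<^bsub>QF I\<^esub> x)"

definition qinfinitesimal :: "('a fset \<Rightarrow> real) set \<Rightarrow> ('a fset \<Rightarrow> real) set \<Rightarrow> bool" where
  "qinfinitesimal I x \<longleftrightarrow> (\<forall>n::nat. n \<ge> 1 \<longrightarrow> qlt I (qabs I x) (projJ I (\<lambda>_. 1 / real n)))"

typedef pnat = "{n::nat. 0 < n}" morphisms nat_of_pnat Abs_pnat
  by auto

definition initseg :: "nat \<Rightarrow> pnat set" where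
  "initseg n = Abs_pnat ` {1..n}"

definition Lambda_n :: "pnat fset set" where
  "Lambda_n = {Abs_fset (initseg n) | n. n \<ge> 1}"

end

theory Submission
  imports Defs
begin

lemma FA_carrier[simp]: "carrier FunAlg = UNIV" by (simp add: FunAlg_def)
lemma FA_mult[simp]: "x \<otimes>\<^bsub>FunAlg\<^esub> y = (\<lambda>l. x l * y l)" by (simp add: FunAlg_def)
lemma FA_add[simp]: "x \<oplus>\<^bsub>FunAlg\<^esub> y = (\<lambda>l. x l + y l)" by (simp add: FunAlg_def)
lemma FA_one[simp]: "\<one>\<^bsub>FunAlg\<^esub> = (\<lambda>_. 1)" by (simp add: FunAlg_def)
lemma FA_zero[simp]: "\<zero>\<^bsub>FunAlg\<^esub> = (\<lambda>_. 0)" by (simp add: FunAlg_def)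

lemma FA_cring: "cring FunAlg"
proof (rule cringI)
  show "abelian_group FunAlg"
  proof (rule abelian_groupI)
    show "\<And>x. x \<in> carrier FunAlg \<Longrightarrow> \<exists>y\<in>carrier FunAlg. y \<oplus>\<^bsub>FunAlg\<^esub> x = \<zero>\<^bsub>FunAlg\<^esub>"
      by (rule_tac x="\<lambda>l. - x l" in bexI) auto
  qed auto
  show "comm_monoid FunAlg"
    by (rule comm_monoidI) auto
qed (auto simp: distrib_right)

lemma FA_ainv[simp]: "\<ominus>\<^bsub>FunAlg\<^esub> x = (\<lambda>l. - x l)"
proof -
  interpret cring FunAlg by (rule FA_cring)
  show ?thesis by (rule minus_equality) auto
qed

lemma FA_minus[simp]: "x \<ominus>\<^bsub>FunAlg\<^esub> y = (\<lambda>l. x l - y l)"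
  by (simp add: a_minus_def)

definition large :: "('a fset \<Rightarrow> real) set \<Rightarrow> 'a fset set \<Rightarrow> bool" where
  "large I S \<longleftrightarrow> (\<lambda>l. if l \<in> S then 0 else 1) \<in> I"

context
  fixes I :: "('a fset \<Rightarrow> real) set"
  assumes MI: "maximalideal I FunAlg"
begin

interpretation maximalideal I FunAlg by (rule MI)

lemma I_mult: "f \<in> I \<Longrightarrow> (\<lambda>l. g l * f l) \<in> I"
  using I_l_closed[of f g] by simp

lemma I_add: "f \<in> I \<Longrightarrow> g \<in> I \<Longrightarrow> (\<lambda>l. f l + g l) \<in> I"
  using additive_subgroup.a_closed[OF is_additive_subgroup, of f g] by simp

lemma hom: "ring_hom_cring FunAlg (FunAlg Quot I) ((+>\<^bsub>FunAlg\<^esub>) I)"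
  by (rule rcos_ring_hom_cring) (rule FA_cring)

lemma hom2: "(+>\<^bsub>FunAlg\<^esub>) I \<in> ring_hom FunAlg (QF I)"
  by (rule rcos_ring_hom)

lemma J_mult: "projJ I f \<otimes>\<^bsub>QF I\<^esub> projJ I g = projJ I (\<lambda>l. f l * g l)"
  using ring_hom_mult[OF hom2, of f g] by (simp add: projJ_def)

lemma J_one: "projJ I (\<lambda>_. 1) = \<one>\<^bsub>QF I\<^esub>"
  using ring_hom_one[OF hom2] by (simp add: projJ_def)

lemma J_ainv: "\<ominus>\<^bsub>QF I\<^esub> projJ I f = projJ I (\<lambda>l. - f l)"
  using ring_hom_cring.hom_a_inv[OF hom, where x=f] by (simp add: projJ_def)

lemma J_add: "projJ I f \<oplus>\<^bsub>QF I\<^esub> projJ I g = projJ I (\<lambda>l. f l + g l)"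
  using ring_hom_add[OF hom2, of f g] by (simp add: projJ_def)

lemma J_minus: "projJ I f \<ominus>\<^bsub>QF I\<^esub> projJ I g = projJ I (\<lambda>l. f l - g l)"
  by (simp add: a_minus_def J_ainv J_add)

lemma J_carrier: "projJ I f \<in> carrier (QF I)"
  using ring_hom_closed[OF hom2, of f] by (simp add: projJ_def)

lemma J_eq: "projJ I f = projJ I g \<longleftrightarrow> (\<lambda>l. f l - g l) \<in> I"
proof
  assume "projJ I f = projJ I g"
  then have "f \<in> I +>\<^bsub>FunAlg\<^esub> g"
    using a_repr_independenceD[of f g] by (simp add: projJ_def)
  then show "(\<lambda>l. f l - g l) \<in> I"
    using a_rcos_module_minus[OF cring.axioms(1)[OF FA_cring], of g f] by simp
next
  assume "(\<lambda>l. f l - g l) \<in> I"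
  then have "f \<in> I +>\<^bsub>FunAlg\<^esub> g"
    using a_rcos_module_minus[OF cring.axioms(1)[OF FA_cring], of g f] by simp
  then show "projJ I f = projJ I g"
    using a_repr_independence'[of f g] by (simp add: projJ_def)
qed

lemma large_agree:
  assumes "large I S" "\<And>l. l \<in> S \<Longrightarrow> f l = g l"
  shows "projJ I f = projJ I g"
proof -
  have "(\<lambda>l. (f l - g l) * (if l \<in> S then 0 else 1)) \<in> I"
    using I_r_closed[of "\<lambda>l. if l \<in> S then 0 else 1" "\<lambda>l. f l - g l"] assms(1)
    by (simp add: large_def mult.commute)
  moreover have "(\<lambda>l. (f l - g l) * (if l \<in> S then 0 else 1)) = (\<lambda>l. f l - g l)"
    using assms(2) by auto
  ultimately show ?thesis by (simp add: J_eq)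
qed

lemma large_notin:
  assumes "large I S" "\<And>l. l \<in> S \<Longrightarrow> h l \<noteq> 0"
  shows "h \<notin> I"
proof
  assume "h \<in> I"
  then have "(\<lambda>l. (if l \<in> S then 1 / h l else 0) * h l) \<in> I" by (rule I_mult)
  from I_add[OF this assms(1)[unfolded large_def]]
  have "(\<lambda>l. (if l \<in> S then 1 / h l else 0) * h l + (if l \<in> S then 0 else 1)) \<in> I" .
  moreover have "(\<lambda>l. (if l \<in> S then 1 / h l else 0) * h l + (if l \<in> S then 0 else 1)) = (\<lambda>_. 1)"
    using assms(2) by (auto simp: fun_eq_iff)
  ultimately have "\<one>\<^bsub>FunAlg\<^esub> \<in> I" by simp
  then have "I = carrier FunAlg" by (rule one_imp_carrier)
  then show False using I_notcarr by simp
qed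

lemma large_neq:
  assumes "large I S" "\<And>l. l \<in> S \<Longrightarrow> f l \<noteq> g l"
  shows "projJ I f \<noteq> projJ I g"
  using large_notin[OF assms(1), of "\<lambda>l. f l - g l"] assms(2) by (simp add: J_eq)

lemma large_Int:
  assumes "large I S" "large I T"
  shows "large I (S \<inter> T)"
proof -
  have "(\<lambda>l. (if l \<in> S then 1 else 0) * (if l \<in> T then 0 else 1)) \<in> I"
    using assms(2) by (intro I_mult) (simp add: large_def)
  from I_add[OF assms(1)[unfolded large_def] this]
  show ?thesis unfolding large_def
    by (rule back_subst[of "\<lambda>x. x \<in> I"]) (auto simp: fun_eq_iff)
qed

lemma large_mono:
  assumes "large I S" "S \<subseteq> T"
  shows "large I T"
proof -
  have "(\<lambda>l. (if l \<in> T then 0 else 1) * (if l \<in> S then 0 else (1::real))) \<in> I"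
    using assms(1) by (intro I_mult) (simp add: large_def)
  then show ?thesis unfolding large_def
    by (rule back_subst[of "\<lambda>x. x \<in> I"]) (use assms(2) in \<open>auto simp: fun_eq_iff\<close>)
qed

lemma large_qlt:
  assumes "large I S" "\<And>l. l \<in> S \<Longrightarrow> k l < c"
  shows "qlt I (projJ I k) (projJ I (\<lambda>_. c))"
proof -
  have "projJ I k = projJ I (\<lambda>l. min (k l) c)"
    using assms by (intro large_agree[OF assms(1)]) (simp add: less_imp_le)
  moreover have "\<forall>l. min (k l) c \<le> c" by simp
  ultimately have "qle I (projJ I k) (projJ I (\<lambda>_. c))"
    unfolding qle_def by blast
  moreover have "projJ I k \<noteq> projJ I (\<lambda>_. c)"
    using assms by (intro large_neq[OF assms(1)]) force
  ultimately show ?thesis by (simp add: qlt_def)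
qed

lemma J_inv:
  assumes "large I S" "\<And>l. l \<in> S \<Longrightarrow> c l \<noteq> 0"
  shows "inv\<^bsub>QF I\<^esub> (projJ I c) = projJ I (\<lambda>l. 1 / c l)"
proof -
  interpret Q: cring "QF I" by (rule quotient_is_cring[OF FA_cring])
  have e: "projJ I c \<otimes>\<^bsub>QF I\<^esub> projJ I (\<lambda>l. 1 / c l) = \<one>\<^bsub>QF I\<^esub>"
    unfolding J_mult J_one[symmetric] using assms by (intro large_agree[OF assms(1)]) simp
  show ?thesis
    by (rule Q.inv_unique'[symmetric]) (use e J_carrier Q.m_comm in auto)
qed

end

lemma initseg_finite: "finite (initseg m)"
  by (simp add: initseg_def)

lemma initseg_card: "card (initseg m) = m"
proof -
  have "inj_on Abs_pnat {1..m}"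
    by (rule inj_onI) (simp add: Abs_pnat_inject)
  then show ?thesis by (simp add: initseg_def card_image)
qed

lemma initseg_mem: "k \<ge> 1 \<Longrightarrow> Abs_pnat k \<in> initseg m \<Longrightarrow> k \<le> m"
  unfolding initseg_def by (auto simp: Abs_pnat_inject)

lemma Lambda_nE:
  assumes "l \<in> Lambda_n"
  obtains m where "m \<ge> 1" "fset l = initseg m"
  using assms unfolding Lambda_n_def
  by (auto simp: Abs_fset_inverse initseg_finite)

theorem mainTheorem12:
  fixes I :: "(pnat fset \<Rightarrow> real) set" and A :: "pnat set" and L :: real
  assumes "fine_ideal I"
    and "I0 Lambda_n \<subseteq> I"
    and "(\<lambda>n. real (card (A \<inter> initseg n)) / real n) \<longlonglongrightarrow> L"
  shows "qinfinitesimal I (napP (\<lambda>_. 1) I A \<ominus>\<^bsub>QF I\<^esub> projJ I (\<lambda>_. L))"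
proof -
  have MI: "maximalideal I FunAlg" using assms(1) by (simp add: fine_ideal_def)
  have LL: "large I Lambda_n"
    unfolding large_def using assms(2) by (rule subsetD) (simp add: I0_def)
  have Lw: "large I {l. \<omega> |\<in>| l}" for \<omega>
  proof -
    have "(\<lambda>l. 1 - chi l \<omega>) \<in> I" using assms(1) by (simp add: fine_ideal_def)
    moreover have "(\<lambda>l. 1 - chi l \<omega>) = (\<lambda>l. if l \<in> {l. \<omega> |\<in>| l} then 0 else 1)"
      by (auto simp: chi_def fun_eq_iff)
    ultimately show ?thesis by (simp add: large_def)
  qed
  define num where "num l = (\<Sum>\<omega>\<in>fset l \<inter> A. (1::real))" for l :: "pnat fset"
  define c where "c l = (\<Sum>\<omega>\<in>fset l. (1::real))" for l :: "pnat fset"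
  define h where "h l = num l * (1 / c l) - L" for l :: "pnat fset"
  have cnz: "c l \<noteq> 0" if lL: "l \<in> Lambda_n" for l :: "pnat fset"
  proof -
    obtain m where m: "m \<ge> 1" "fset l = initseg m" using lL by (rule Lambda_nE)
    then show ?thesis by (simp add: c_def initseg_card)
  qed
  have e1: "(\<lambda>l. \<Sum>\<omega>\<in>fset l. (1::real)) = c" by (simp add: c_def fun_eq_iff)
  have e2: "(\<lambda>l. \<Sum>\<omega>\<in>fset l \<inter> A. (1::real)) = num" by (simp add: num_def fun_eq_iff)
  have napP: "napP (\<lambda>_. 1) I A = projJ I (\<lambda>l. num l * (1 / c l))"
  proof -
    have iv: "inv\<^bsub>QF I\<^esub> (projJ I c) = projJ I (\<lambda>l. 1 / c l)"
      by (rule J_inv[OF MI LL cnz])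
    show ?thesis unfolding napP_def e1 e2 iv J_mult[OF MI] ..
  qed
  have d: "napP (\<lambda>_. 1) I A \<ominus>\<^bsub>QF I\<^esub> projJ I (\<lambda>_. L) = projJ I h"
    unfolding napP J_minus[OF MI] h_def ..
  show ?thesis
    unfolding qinfinitesimal_def d
  proof (intro allI impI)
    fix n :: nat assume n: "n \<ge> 1"
    then have "0 < 1 / real n" by simp
    with assms(3) have "\<forall>\<^sub>F m in sequentially. dist (real (card (A \<inter> initseg m)) / real m) L < 1 / real n"
      by (rule tendstoD)
    then obtain M where M: "\<And>m. m \<ge> M \<Longrightarrow> \<bar>real (card (A \<inter> initseg m)) / real m - L\<bar> < 1 / real n"
      by (auto simp: eventually_sequentially dist_real_def)
    define S where "S = Lambda_n \<inter> {l. Abs_pnat (max M 1) |\<in>| l}"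
    have LS: "large I S" unfolding S_def by (rule large_Int[OF MI LL Lw])
    have hS: "\<bar>h l\<bar> < 1 / real n" if "l \<in> S" for l :: "pnat fset"
    proof -
      from that have "l \<in> Lambda_n" by (simp add: S_def)
      then obtain m where m: "m \<ge> 1" "fset l = initseg m" by (rule Lambda_nE)
      have "Abs_pnat (max M 1) |\<in>| l" using that unfolding S_def by blast
      then have "Abs_pnat (max M 1) \<in> initseg m" using m(2) by simp
      then have "max M 1 \<le> m" by (rule initseg_mem[rotated]) simp
      then have "\<bar>real (card (A \<inter> initseg m)) / real m - L\<bar> < 1 / real n" by (intro M) simp
      moreover have "h l = real (card (A \<inter> initseg m)) / real m - L"
        unfolding h_def num_def c_def m(2) by (simp add: initseg_card inf_commute[of A])
      ultimately show ?thesis by simp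
    qed
    show "qlt I (qabs I (projJ I h)) (projJ I (\<lambda>_. 1 / real n))"
    proof (cases "qle I \<zero>\<^bsub>QF I\<^esub> (projJ I h)")
      case True
      then have "qabs I (projJ I h) = projJ I h" by (simp add: qabs_def)
      moreover have "qlt I (projJ I h) (projJ I (\<lambda>_. 1 / real n))"
        using hS by (intro large_qlt[OF MI LS]) (simp add: abs_less_iff)
      ultimately show ?thesis by simp
    next
      case False
      then have "qabs I (projJ I h) = projJ I (\<lambda>l. - h l)" by (simp add: qabs_def J_ainv[OF MI])
      moreover have "qlt I (projJ I (\<lambda>l. - h l)) (projJ I (\<lambda>_. 1 / real n))"
        using hS by (intro large_qlt[OF MI LS]) (simp add: abs_less_iff)
      ultimately show ?thesis by simp
    qed
  qed
qed

end
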